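(* There is a constant $c>0$ such that the following holds for all $n\ge 2$. Let $t$ be a qubit and $c_1,\dots,c_n$ qubits different from $t$. Let $U_1,\dots,U_n$ be $2\times 2$ unitaries that mutually commute ($U_iU_j=U_jU_i$ for all $i,j$), and let $G_i$ be the controlled-$U_i$ gate with control $c_i$ and target $t$. Then the operator $G_nG_{n-1}\cdots G_1$ can be embedded, using at most $cn$ ancillae, in a quantum circuit of depth at most $c\log n$.
   Context: Qubits have computational basis $|0\rangle,|1\rangle$. For a $2\times2$ unitary $U$, the controlled-$U$ gate on (control, target) is $\begin{pmatrix}I&0\\0&U\end{pmatrix}$, applying $U$ to the target when the control is $|1\rangle$. A one-layer circuit is a tensor product of arbitrary one-qubit and two-qubit unitary gates acting on pairwise disjoint sets of qubits; a circuit of depth $k$ is a product of $k$ one-layer circuits. An operator $F$ on $n'$ qubits is embedded in an operator $M$ on $n'+m$ qubits using $m$ ancillae if $M(|\psi\rangle\otimes|0\cdots0\rangle)=(F|\psi\rangle)\otimes|0\cdots0\rangle$ for all $|\psi\rangle$, where the last $m$ qubits are the ancillae. *)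

theory Defs
  imports Complex_Main
begin

text \<open>Computational basis states of a register: bit assignments to qubit labels 0,1,2,...;
  the basis of an N-qubit register consists of assignments vanishing outside {0..<N}.\<close>
type_synonym bits = "nat \<Rightarrow> bool"

definition basis :: "nat \<Rightarrow> bits set" where
  "basis N = {x. \<forall>i. N \<le> i \<longrightarrow> \<not> x i}"

text \<open>Operators given by matrix entries M x y = <x|M|y>; only entries on the basis matter.\<close>
type_synonym qop = "bits \<Rightarrow> bits \<Rightarrow> complex"

definition apply_op :: "nat \<Rightarrow> qop \<Rightarrow> (bits \<Rightarrow> complex) \<Rightarrow> (bits \<Rightarrow> complex)" where
  "apply_op N M v = (\<lambda>x. \<Sum>y\<in>basis N. M x y * v y)"

definition op_mult :: "nat \<Rightarrow> qop \<Rightarrow> qop \<Rightarrow> qop" where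
  "op_mult N A B = (\<lambda>x y. \<Sum>z\<in>basis N. A x z * B z y)"

definition op_id :: qop where
  "op_id = (\<lambda>x y. if x = y then 1 else 0)"

definition op_prod :: "nat \<Rightarrow> qop list \<Rightarrow> qop" where
  "op_prod N As = foldr (op_mult N) As op_id"

type_synonym smat = "nat \<Rightarrow> nat \<Rightarrow> complex"

definition smat_mult :: "nat \<Rightarrow> smat \<Rightarrow> smat \<Rightarrow> smat" where
  "smat_mult d A B = (\<lambda>i j. \<Sum>k<d. A i k * B k j)"

definition unitary_smat :: "nat \<Rightarrow> smat \<Rightarrow> bool" where
  "unitary_smat d U \<longleftrightarrow>
     (\<forall>i<d. \<forall>j<d. (\<Sum>k<d. cnj (U k i) * U k j) = (if i = j then 1 else 0)) \<and>
     (\<forall>i<d. \<forall>j<d. (\<Sum>k<d. U i k * cnj (U j k)) = (if i = j then 1 else 0))"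

text \<open>Index of the local basis state of the qubits qs (first listed qubit = most significant bit).\<close>
fun enc :: "nat list \<Rightarrow> bits \<Rightarrow> nat" where
  "enc [] x = 0"
| "enc (q # qs) x = (if x q then 2 ^ length qs else 0) + enc qs x"

text \<open>A gate: the (ordered) qubits it acts on, and its local matrix.\<close>
type_synonym gate = "nat list \<times> smat"

definition valid_gate :: "nat \<Rightarrow> gate \<Rightarrow> bool" where
  "valid_gate N g \<longleftrightarrow> distinct (fst g) \<and> 1 \<le> length (fst g) \<and> length (fst g) \<le> 2 \<and>
     set (fst g) \<subseteq> {..<N} \<and> unitary_smat (2 ^ length (fst g)) (snd g)"

definition valid_layer :: "nat \<Rightarrow> gate list \<Rightarrow> bool" where
  "valid_layer N gs \<longleftrightarrow> (\<forall>g\<in>set gs. valid_gate N g) \<and>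
     (\<forall>i<length gs. \<forall>j<length gs. i \<noteq> j \<longrightarrow> set (fst (gs ! i)) \<inter> set (fst (gs ! j)) = {})"

text \<open>The tensor product of the gates of a layer (identity on untouched qubits).\<close>
definition layer_op :: "gate list \<Rightarrow> qop" where
  "layer_op gs = (\<lambda>x y.
     if (\<forall>q. q \<notin> (\<Union>g\<in>set gs. set (fst g)) \<longrightarrow> x q = y q)
     then (\<Prod>g\<leftarrow>gs. snd g (enc (fst g) x) (enc (fst g) y)) else 0)"

text \<open>A circuit is a list of layers; its depth is the number of layers.\<close>
definition valid_circuit :: "nat \<Rightarrow> gate list list \<Rightarrow> bool" where
  "valid_circuit N Ls \<longleftrightarrow> (\<forall>L\<in>set Ls. valid_layer N L)"

definition circuit_op :: "nat \<Rightarrow> gate list list \<Rightarrow> qop" where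
  "circuit_op N Ls = op_prod N (map layer_op Ls)"

text \<open>Controlled-U on (control, target): block matrix diag(I, U).\<close>
definition controlled :: "smat \<Rightarrow> smat" where
  "controlled U = (\<lambda>i j. if i < 2 \<and> j < 2 then (if i = j then 1 else 0)
                         else if 2 \<le> i \<and> i < 4 \<and> 2 \<le> j \<and> j < 4 then U (i - 2) (j - 2) else 0)"

definition cgate_op :: "nat \<Rightarrow> nat \<Rightarrow> smat \<Rightarrow> qop" where
  "cgate_op c t U = layer_op [([c, t], controlled U)]"

text \<open>psi tensor |0...0> with the m ancillae being qubits n', ..., n'+m-1.\<close>
definition with_ancillae :: "nat \<Rightarrow> nat \<Rightarrow> (bits \<Rightarrow> complex) \<Rightarrow> (bits \<Rightarrow> complex)" where
  "with_ancillae n' m psi = (\<lambda>y. if (\<forall>i\<in>{n'..<n'+m}. \<not> y i) then psi y else 0)"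

definition embeds :: "nat \<Rightarrow> qop \<Rightarrow> nat \<Rightarrow> qop \<Rightarrow> bool" where
  "embeds n' F m M \<longleftrightarrow>
     (\<forall>psi. \<forall>x\<in>basis (n' + m).
        apply_op (n' + m) M (with_ancillae n' m psi) x =
        with_ancillae n' m (apply_op n' F psi) x)"

end

theory Submission
  imports Defs
begin

lemma sum2: "(\<Sum>k<(2::nat). f k) = f 0 + f 1"
  by (simp add: numeral_2_eq_2)

lemma all2: "(\<forall>a<(2::nat). P a) \<longleftrightarrow> P 0 \<and> P 1"
  by (auto simp: numeral_2_eq_2 less_Suc_eq)

lemma sum_bool: "(\<Sum>k\<in>(UNIV::bool set). f k) = f False + f True"
  by (simp add: UNIV_bool)

lemma finite_basis: "finite (basis N)"
proof -
  have "basis N \<subseteq> (\<lambda>S i. i \<in> S) ` Pow {..<N}"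
  proof
    fix x assume "x \<in> basis N"
    then have "x = (\<lambda>i. i \<in> {i. i < N \<and> x i})" by (auto simp: basis_def not_le[symmetric])
    then show "x \<in> (\<lambda>S i. i \<in> S) ` Pow {..<N}" by blast
  qed
  then show ?thesis by (rule finite_subset) auto
qed

lemma apply_mult: "apply_op N (op_mult N A B) v x = apply_op N A (apply_op N B v) x"
proof -
  have "apply_op N (op_mult N A B) v x = (\<Sum>y\<in>basis N. \<Sum>z\<in>basis N. A x z * B z y * v y)"
    unfolding apply_op_def op_mult_def by (simp add: sum_distrib_right)
  also have "\<dots> = (\<Sum>z\<in>basis N. \<Sum>y\<in>basis N. A x z * B z y * v y)"
    by (rule sum.swap)
  also have "\<dots> = apply_op N A (apply_op N B v) x"
    unfolding apply_op_def by (simp add: sum_distrib_left mult.assoc)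
  finally show ?thesis .
qed

lemma apply_cong: "(\<And>y. y \<in> basis N \<Longrightarrow> v y = w y) \<Longrightarrow> apply_op N A v x = apply_op N A w x"
  unfolding apply_op_def by (auto intro!: sum.cong)

lemma apply_id: assumes "x \<in> basis N" shows "apply_op N op_id v x = v x"
proof -
  have "apply_op N op_id v x = (\<Sum>y\<in>basis N. if x = y then v y else 0)"
    unfolding apply_op_def op_id_def by (rule sum.cong) auto
  also have "\<dots> = v x" using assms finite_basis[of N] by (simp add: sum.delta)
  finally show ?thesis .
qed

lemma apply_prod_Cons: "apply_op N (op_prod N (A # As)) v x = apply_op N A (apply_op N (op_prod N As) v) x"
  by (simp add: op_prod_def apply_mult)

lemma apply_prod_append: "x \<in> basis N \<Longrightarrow>
  apply_op N (op_prod N (As @ Bs)) v x = apply_op N (op_prod N As) (apply_op N (op_prod N Bs) v) x"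
proof (induction As arbitrary: x)
  case Nil
  then show ?case by (simp add: op_prod_def apply_id)
next
  case (Cons A As)
  have "apply_op N (op_prod N ((A # As) @ Bs)) v x = apply_op N A (apply_op N (op_prod N (As@Bs)) v) x"
    by (simp add: apply_prod_Cons)
  also have "\<dots> = apply_op N A (apply_op N (op_prod N As) (apply_op N (op_prod N Bs) v)) x"
    by (rule apply_cong) (rule Cons.IH)
  finally show ?case by (simp add: apply_prod_Cons)
qed

definition bt :: "bool \<Rightarrow> nat" where "bt b = (if b then 1 else 0)"
definition agree :: "nat \<Rightarrow> bits \<Rightarrow> bits \<Rightarrow> bool" where "agree t x y = (\<forall>q. q \<noteq> t \<longrightarrow> x q = y q)"
definition Id2 :: smat where "Id2 = (\<lambda>i j. if i = j then 1 else 0)"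

lemma basis_upd: "t < N \<Longrightarrow> x \<in> basis N \<Longrightarrow> x(t:=k) \<in> basis N"
  by (auto simp: basis_def)

lemma tloc_apply:
  assumes "t < N" "x \<in> basis N"
    and op: "\<And>y. y \<in> basis N \<Longrightarrow> Op x y = (if agree t x y then M (bt (x t)) (bt (y t)) else 0)"
  shows "apply_op N Op v x = (\<Sum>k\<in>UNIV. M (bt (x t)) (bt k) * v (x(t:=k)))"
proof -
  have "apply_op N Op v x = (\<Sum>y\<in>basis N. if agree t x y then M (bt (x t)) (bt (y t)) * v y else 0)"
    unfolding apply_op_def by (rule sum.cong) (auto simp: op)
  also have "\<dots> = (\<Sum>y\<in>{y\<in>basis N. agree t x y}. M (bt (x t)) (bt (y t)) * v y)"
    by (simp add: sum.inter_filter finite_basis)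
  also have "{y\<in>basis N. agree t x y} = range (\<lambda>k. x(t:=k))"
  proof (intro set_eqI iffI)
    fix y assume "y \<in> {y\<in>basis N. agree t x y}"
    then have "y = x(t := y t)" by (auto simp: agree_def fun_eq_iff)
    then show "y \<in> range (\<lambda>k. x(t:=k))" by blast
  next
    fix y assume "y \<in> range (\<lambda>k. x(t:=k))"
    then obtain k where "y = x(t:=k)" by blast
    then show "y \<in> {y\<in>basis N. agree t x y}" using assms(1,2) by (simp add: agree_def basis_upd)
  qed
  also have "(\<Sum>y\<in>range (\<lambda>k. x(t:=k)). M (bt (x t)) (bt (y t)) * v y) = (\<Sum>k\<in>UNIV. M (bt (x t)) (bt k) * v (x(t:=k)))"
  proof (subst sum.reindex)
    show "inj_on (\<lambda>k. x(t:=k)) UNIV"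
      by (rule inj_onI) (drule fun_cong[of _ _ t], simp)
  qed simp
  finally show ?thesis .
qed

lemma layer1: "layer_op [(qs, M)] x y = (if (\<forall>q. q \<notin> set qs \<longrightarrow> x q = y q) then M (enc qs x) (enc qs y) else 0)"
  unfolding layer_op_def by simp blast

lemma enc2: "enc [a, b] x = (if x a then 2 else 0) + (if x b then 1 else 0)"
  by simp

lemma agree2: "c \<noteq> t \<Longrightarrow> agree t x y = ((\<forall>q. q \<notin> set [c, t] \<longrightarrow> x q = y q) \<and> x c = y c)"
  unfolding agree_def by auto

lemma ctrl_val: "controlled U ((if a then 2 else 0) + (if b then 1 else 0)) ((if a' then 2 else 0) + (if b' then 1 else 0))
   = (if a = a' then (if a then U else Id2) (bt b) (bt b') else 0)"
  unfolding controlled_def Id2_def bt_def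
  by (cases a; cases a'; cases b; cases b') simp_all

lemma cgate_eq: assumes "c \<noteq> t" shows "cgate_op c t U x y =
   (if agree t x y then (if x c then U else Id2) (bt (x t)) (bt (y t)) else 0)"
proof -
  have "cgate_op c t U x y = (if (\<forall>q. q \<notin> set [c, t] \<longrightarrow> x q = y q) then controlled U (enc [c,t] x) (enc [c,t] y) else 0)"
    unfolding cgate_op_def by (rule layer1)
  also have "\<dots> = (if agree t x y then (if x c then U else Id2) (bt (x t)) (bt (y t)) else 0)"
    unfolding agree2[OF assms] enc2 ctrl_val by auto
  finally show ?thesis .
qed

lemma vlayer_eq: "layer_op [([t], V)] x y = (if agree t x y then V (bt (x t)) (bt (y t)) else 0)"
  unfolding layer_op_def agree_def bt_def by auto

fun Pm :: "(nat \<Rightarrow> nat) \<Rightarrow> (nat \<Rightarrow> smat) \<Rightarrow> bits \<Rightarrow> nat list \<Rightarrow> smat" where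
  "Pm c U x [] = Id2"
| "Pm c U x (i # is) = smat_mult 2 (if x (c i) then U i else Id2) (Pm c U x is)"

lemma Pm_upd: "\<forall>i\<in>set is. c i \<noteq> t \<Longrightarrow> Pm c U (x(t:=k)) is = Pm c U x is"
  by (induction "is") auto

lemma F_apply:
  assumes "t < N" "x \<in> basis N" "\<forall>i\<in>set is. c i \<noteq> t"
  shows "apply_op N (op_prod N (map (\<lambda>i. cgate_op (c i) t (U i)) is)) psi x =
         (\<Sum>l\<in>UNIV. Pm c U x is (bt (x t)) (bt l) * psi (x(t:=l)))"
  using assms(2,3)
proof (induction "is" arbitrary: x)
  case Nil
  have u1: "x t \<Longrightarrow> x(t:=True) = x" by (rule fun_upd_idem) simp
  have u2: "\<not> x t \<Longrightarrow> x(t:=False) = x" by (rule fun_upd_idem) simp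
  have "apply_op N (op_prod N []) psi x = psi x" using Nil by (simp add: op_prod_def apply_id)
  moreover have "(\<Sum>l\<in>UNIV. Pm c U x [] (bt (x t)) (bt l) * psi (x(t:=l))) = psi x"
    unfolding sum_bool by (cases "x t") (simp_all add: u1 u2 Id2_def bt_def)
  ultimately show ?case by (simp only: list.map(1))
next
  case (Cons i "is")
  let ?M = "if x (c i) then U i else Id2"
  have "apply_op N (op_prod N (map (\<lambda>i. cgate_op (c i) t (U i)) (i # is))) psi x
      = apply_op N (cgate_op (c i) t (U i)) (apply_op N (op_prod N (map (\<lambda>i. cgate_op (c i) t (U i)) is)) psi) x"
    by (simp add: apply_prod_Cons)
  also have "\<dots> = (\<Sum>k\<in>UNIV. ?M (bt (x t)) (bt k) * apply_op N (op_prod N (map (\<lambda>i. cgate_op (c i) t (U i)) is)) psi (x(t:=k)))"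
    by (rule tloc_apply[OF assms(1) Cons.prems(1)]) (use Cons.prems in \<open>simp add: cgate_eq\<close>)
  also have "\<dots> = (\<Sum>k\<in>UNIV. ?M (bt (x t)) (bt k) * (\<Sum>l\<in>UNIV. Pm c U x is (bt k) (bt l) * psi (x(t:=l))))"
  proof (rule sum.cong[OF refl])
    fix k
    have b: "x(t:=k) \<in> basis N" by (rule basis_upd[OF assms(1) Cons.prems(1)])
    have ni: "\<forall>i\<in>set is. c i \<noteq> t" using Cons.prems(2) by simp
    have "apply_op N (op_prod N (map (\<lambda>i. cgate_op (c i) t (U i)) is)) psi (x(t:=k))
       = (\<Sum>l\<in>UNIV. Pm c U (x(t:=k)) is (bt ((x(t:=k)) t)) (bt l) * psi ((x(t:=k))(t:=l)))"
      by (rule Cons.IH[OF b ni])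
    also have "\<dots> = (\<Sum>l\<in>UNIV. Pm c U x is (bt k) (bt l) * psi (x(t:=l)))"
      by (simp only: Pm_upd[OF ni] fun_upd_same fun_upd_upd)
    finally show "?M (bt (x t)) (bt k) * apply_op N (op_prod N (map (\<lambda>i. cgate_op (c i) t (U i)) is)) psi (x(t:=k))
       = ?M (bt (x t)) (bt k) * (\<Sum>l\<in>UNIV. Pm c U x is (bt k) (bt l) * psi (x(t:=l)))" by simp
  qed
  also have "\<dots> = (\<Sum>l\<in>UNIV. Pm c U x (i # is) (bt (x t)) (bt l) * psi (x(t:=l)))"
    by (simp add: sum_bool smat_mult_def sum2 bt_def algebra_simps)
  finally show ?case .
qed

lemma unit_eqs:
  assumes "unitary_smat 2 B"
  shows "cnj (B 0 0) * B 0 0 + cnj (B 1 0) * B 1 0 = 1"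
    "cnj (B 0 0) * B 0 1 + cnj (B 1 0) * B 1 1 = 0"
    "cnj (B 0 1) * B 0 0 + cnj (B 1 1) * B 1 0 = 0"
    "cnj (B 0 1) * B 0 1 + cnj (B 1 1) * B 1 1 = 1"
    "B 0 0 * cnj (B 0 0) + B 0 1 * cnj (B 0 1) = 1"
    "B 0 0 * cnj (B 1 0) + B 0 1 * cnj (B 1 1) = 0"
    "B 1 0 * cnj (B 0 0) + B 1 1 * cnj (B 0 1) = 0"
    "B 1 0 * cnj (B 1 0) + B 1 1 * cnj (B 1 1) = 1"
  using assms unfolding unitary_smat_def all2 sum2 by simp_all

lemma preserve:
  assumes "unitary_smat 2 B"
  shows "cnj (B 0 0 * x0 + B 0 1 * x1) * (B 0 0 * y0 + B 0 1 * y1) + cnj (B 1 0 * x0 + B 1 1 * x1) * (B 1 0 * y0 + B 1 1 * y1)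
       = cnj x0 * y0 + cnj x1 * y1"
proof -
  note h = unit_eqs[OF assms]
  have "cnj (B 0 0 * x0 + B 0 1 * x1) * (B 0 0 * y0 + B 0 1 * y1) + cnj (B 1 0 * x0 + B 1 1 * x1) * (B 1 0 * y0 + B 1 1 * y1)
     = cnj x0 * y0 * (cnj (B 0 0) * B 0 0 + cnj (B 1 0) * B 1 0) + cnj x0 * y1 * (cnj (B 0 0) * B 0 1 + cnj (B 1 0) * B 1 1)
      + cnj x1 * y0 * (cnj (B 0 1) * B 0 0 + cnj (B 1 1) * B 1 0) + cnj x1 * y1 * (cnj (B 0 1) * B 0 1 + cnj (B 1 1) * B 1 1)"
    by (simp add: algebra_simps)
  also have "\<dots> = cnj x0 * y0 + cnj x1 * y1" by (simp only: h) simp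
  finally show ?thesis .
qed

lemma normalize2:
  fixes u0 u1 :: complex
  assumes "u0 \<noteq> 0 \<or> u1 \<noteq> 0"
  shows "\<exists>s. cnj (s * u0) * (s * u0) + cnj (s * u1) * (s * u1) = 1"
proof -
  define r where "r = (cmod u0)^2 + (cmod u1)^2"
  have "r > 0" using assms unfolding r_def by (auto simp: add_pos_nonneg add_nonneg_pos)
  define s where "s = complex_of_real (1 / sqrt r)"
  have "cnj (s * u0) * (s * u0) + cnj (s * u1) * (s * u1) = (cnj s * s) * (cnj u0 * u0 + cnj u1 * u1)"
    by (simp add: algebra_simps)
  also have "cnj u0 * u0 + cnj u1 * u1 = complex_of_real r"
    unfolding r_def of_real_add complex_norm_square by (simp add: mult.commute)
  also have "cnj s * s = complex_of_real (1 / r)"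
    unfolding s_def using \<open>r > 0\<close> by (simp add: power2_eq_square[symmetric] power_divide flip: of_real_power)
  finally show ?thesis using \<open>r > 0\<close>
    by (metis divide_self_if less_irrefl of_real_1 of_real_mult times_divide_eq_left mult_1)
qed

lemma eigvec:
  fixes a b c d :: complex
  shows "\<exists>v0 v1 l. cnj v0 * v0 + cnj v1 * v1 = 1 \<and> a * v0 + b * v1 = l * v0 \<and> c * v0 + d * v1 = l * v1"
proof -
  define l where "l = (a + d + csqrt ((a - d)^2 + 4 * b * c)) / 2"
  have sq: "(csqrt ((a - d)^2 + 4 * b * c))^2 = (a - d)^2 + 4 * b * c" by (rule power2_csqrt)
  have ch: "l * l - (a + d) * l + (a * d - b * c) = 0"
  proof -
    have "l * l - (a + d) * l + (a * d - b * c) = ((csqrt ((a - d)^2 + 4 * b * c))^2 - ((a - d)^2 + 4 * b * c)) / 4"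
      unfolding l_def by (simp add: field_simps power2_eq_square)
    then show ?thesis using sq by simp
  qed
  have "\<exists>u0 u1. (u0 \<noteq> 0 \<or> u1 \<noteq> 0) \<and> a * u0 + b * u1 = l * u0 \<and> c * u0 + d * u1 = l * u1"
  proof (cases "b \<noteq> 0 \<or> l - a \<noteq> 0")
    case True
    have "c * b + d * (l - a) = l * (l - a)" using ch by algebra
    moreover have "a * b + b * (l - a) = l * b" by algebra
    ultimately show ?thesis using True by blast
  next
    case F1: False
    show ?thesis
    proof (cases "l - d \<noteq> 0 \<or> c \<noteq> 0")
      case True
      have "a * (l - d) + b * c = l * (l - d)" using ch by algebra
      moreover have "c * (l - d) + d * c = l * c" by algebra
      ultimately show ?thesis using True by blast
    next
      case False
      then have "a * 1 + b * 0 = l * 1" "c * 1 + d * 0 = l * 0" using F1 by auto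
      then show ?thesis by (intro exI[of _ 1] exI[of _ 0]) simp
    qed
  qed
  then obtain u0 u1 where u: "u0 \<noteq> 0 \<or> u1 \<noteq> 0" "a * u0 + b * u1 = l * u0" "c * u0 + d * u1 = l * u1" by blast
  obtain s where s: "cnj (s * u0) * (s * u0) + cnj (s * u1) * (s * u1) = 1" using normalize2[OF u(1)] by blast
  have "a * (s * u0) + b * (s * u1) = l * (s * u0)" using u(2) by (metis mult.left_commute distrib_left)
  moreover have "c * (s * u0) + d * (s * u1) = l * (s * u1)" using u(3) by (metis mult.left_commute distrib_left)
  ultimately show ?thesis using s by blast
qed

definition vmat :: "complex \<Rightarrow> complex \<Rightarrow> smat" where
  "vmat v0 v1 = (\<lambda>a k. if a = 0 then (if k = 0 then v0 else - cnj v1) else (if k = 0 then v1 else cnj v0))"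

lemma vmat_unitary:
  assumes v: "cnj v0 * v0 + cnj v1 * v1 = 1"
  shows "unitary_smat 2 (vmat v0 v1)"
  unfolding unitary_smat_def all2 sum2 vmat_def using v
  by (simp add: algebra_simps)

lemma joint_diag_one:
  assumes v: "cnj v0 * v0 + cnj v1 * v1 = 1"
    and eA1: "A 0 0 * v0 + A 0 1 * v1 = l * v0" and eA2: "A 1 0 * v0 + A 1 1 * v1 = l * v1"
    and nd: "A 0 1 \<noteq> 0 \<or> A 1 0 \<noteq> 0"
    and uB: "unitary_smat 2 B"
    and com: "\<forall>a<2. \<forall>b<2. smat_mult 2 A B a b = smat_mult 2 B A a b"
  shows "\<exists>\<mu> \<nu>. cnj \<mu> * \<mu> = 1 \<and> cnj \<nu> * \<nu> = 1 \<and>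
     (\<forall>a<2. \<forall>b<2. B a b = (\<Sum>k<2. vmat v0 v1 a k * (if k = 0 then \<mu> else \<nu>) * cnj (vmat v0 v1 b k)))"
proof -
  have c00: "A 0 0 * B 0 0 + A 0 1 * B 1 0 = B 0 0 * A 0 0 + B 0 1 * A 1 0"
   and c01: "A 0 0 * B 0 1 + A 0 1 * B 1 1 = B 0 0 * A 0 1 + B 0 1 * A 1 1"
   and c10: "A 1 0 * B 0 0 + A 1 1 * B 1 0 = B 1 0 * A 0 0 + B 1 1 * A 1 0"
   and c11: "A 1 0 * B 0 1 + A 1 1 * B 1 1 = B 1 0 * A 0 1 + B 1 1 * A 1 1"
    using com unfolding all2 smat_mult_def sum2 by simp_all
  define w0 where "w0 = B 0 0 * v0 + B 0 1 * v1"
  define w1 where "w1 = B 1 0 * v0 + B 1 1 * v1"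
  have Aw0: "A 0 0 * w0 + A 0 1 * w1 = l * w0"
    unfolding w0_def w1_def using c00 c01 eA1 eA2 by algebra
  have Aw1: "A 1 0 * w0 + A 1 1 * w1 = l * w1"
    unfolding w0_def w1_def using c10 c11 eA1 eA2 by algebra
  have det: "v0 * w1 - v1 * w0 = 0"
  proof (rule ccontr)
    assume d: "v0 * w1 - v1 * w0 \<noteq> 0"
    have "A 0 1 * (v0 * w1 - v1 * w0) = 0" using eA1 Aw0 by algebra
    moreover have "A 1 0 * (v0 * w1 - v1 * w0) = 0" using eA2 Aw1 by algebra
    ultimately show False using d nd by simp
  qed
  define \<mu> where "\<mu> = cnj v0 * w0 + cnj v1 * w1"
  have wm0: "w0 = \<mu> * v0" unfolding \<mu>_def using v det by algebra
  have wm1: "w1 = \<mu> * v1" unfolding \<mu>_def using v det by algebra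
  define z0 where "z0 = B 0 0 * (- cnj v1) + B 0 1 * cnj v0"
  define z1 where "z1 = B 1 0 * (- cnj v1) + B 1 1 * cnj v0"
  have ww: "cnj w0 * w0 + cnj w1 * w1 = 1"
    unfolding w0_def w1_def preserve[OF uB] using v .
  have wz: "cnj w0 * z0 + cnj w1 * z1 = 0"
    unfolding w0_def w1_def z0_def z1_def preserve[OF uB] by (simp add: algebra_simps)
  have zz: "cnj z0 * z0 + cnj z1 * z1 = 1"
    unfolding z0_def z1_def preserve[OF uB] using v by (simp add: algebra_simps)
  have mm: "cnj \<mu> * \<mu> = 1"
  proof -
    have "cnj w0 * w0 + cnj w1 * w1 = (cnj \<mu> * \<mu>) * (cnj v0 * v0 + cnj v1 * v1)"
      unfolding wm0 wm1 by (simp add: algebra_simps)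
    then show ?thesis using ww v by simp
  qed
  have vz: "cnj v0 * z0 + cnj v1 * z1 = 0"
  proof -
    have "cnj w0 * z0 + cnj w1 * z1 = cnj \<mu> * (cnj v0 * z0 + cnj v1 * z1)"
      unfolding wm0 wm1 by (simp add: algebra_simps)
    moreover have "cnj \<mu> \<noteq> 0" using mm by auto
    ultimately show ?thesis using wz by simp
  qed
  define \<nu> where "\<nu> = - v1 * z0 + v0 * z1"
  have zn0: "z0 = \<nu> * (- cnj v1)" unfolding \<nu>_def using v vz by algebra
  have zn1: "z1 = \<nu> * cnj v0" unfolding \<nu>_def using v vz by algebra
  have nn: "cnj \<nu> * \<nu> = 1"
  proof -
    have "cnj z0 * z0 + cnj z1 * z1 = (cnj \<nu> * \<nu>) * (cnj v0 * v0 + cnj v1 * v1)"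
      unfolding zn0 zn1 by (simp add: algebra_simps)
    then show ?thesis using zz v by simp
  qed
  have h0: "B 0 0 * v0 + B 0 1 * v1 = \<mu> * v0" using wm0 unfolding w0_def .
  have h1: "B 1 0 * v0 + B 1 1 * v1 = \<mu> * v1" using wm1 unfolding w1_def .
  have h2: "B 0 0 * (- cnj v1) + B 0 1 * cnj v0 = \<nu> * (- cnj v1)" using zn0 unfolding z0_def .
  have h3: "B 1 0 * (- cnj v1) + B 1 1 * cnj v0 = \<nu> * cnj v0" using zn1 unfolding z1_def .
  have "B 0 0 = v0 * \<mu> * cnj v0 + (- cnj v1) * \<nu> * (- v1)" using h0 h2 v by algebra
  moreover have "B 0 1 = v0 * \<mu> * cnj v1 + (- cnj v1) * \<nu> * v0" using h0 h2 v by algebra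
  moreover have "B 1 0 = v1 * \<mu> * cnj v0 + cnj v0 * \<nu> * (- v1)" using h1 h3 v by algebra
  moreover have "B 1 1 = v1 * \<mu> * cnj v1 + cnj v0 * \<nu> * v0" using h1 h3 v by algebra
  ultimately have "\<forall>a<2. \<forall>b<2. B a b = (\<Sum>k<2. vmat v0 v1 a k * (if k = 0 then \<mu> else \<nu>) * cnj (vmat v0 v1 b k))"
    unfolding all2 sum2 vmat_def by simp
  then show ?thesis using mm nn by blast
qed

lemma diag_simul:
  assumes uU: "\<forall>i\<in>I. unitary_smat 2 (U i)"
    and cm: "\<forall>i\<in>I. \<forall>j\<in>I. \<forall>a<2. \<forall>b<2. smat_mult 2 (U i) (U j) a b = smat_mult 2 (U j) (U i) a b"
  shows "\<exists>V L. unitary_smat 2 V \<and> (\<forall>i\<in>I. \<forall>k<2. cnj (L i k) * L i k = 1) \<and>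
     (\<forall>i\<in>I. \<forall>a<2. \<forall>b<2. U i a b = (\<Sum>k<2. V a k * L i k * cnj (V b k)))"
proof (cases "\<exists>k0\<in>I. U k0 0 1 \<noteq> 0 \<or> U k0 1 0 \<noteq> 0")
  case True
  then obtain k0 where k0: "k0 \<in> I" and nd: "U k0 0 1 \<noteq> 0 \<or> U k0 1 0 \<noteq> 0" by blast
  obtain v0 v1 l where v: "cnj v0 * v0 + cnj v1 * v1 = 1"
    and e1: "U k0 0 0 * v0 + U k0 0 1 * v1 = l * v0" and e2: "U k0 1 0 * v0 + U k0 1 1 * v1 = l * v1"
    using eigvec[of "U k0 0 0" "U k0 0 1" "U k0 1 0" "U k0 1 1"] by blast
  define P where "P = (\<lambda>i \<mu> \<nu>. cnj \<mu> * \<mu> = 1 \<and> cnj \<nu> * \<nu> = 1 \<and>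
     (\<forall>a<2. \<forall>b<2. U i a b = (\<Sum>k<2. vmat v0 v1 a k * (if k = 0 then \<mu> else \<nu>) * cnj (vmat v0 v1 b k))))"
  have "\<forall>i\<in>I. \<exists>\<mu> \<nu>. P i \<mu> \<nu>"
  proof
    fix i assume i: "i \<in> I"
    have "\<forall>a<2. \<forall>b<2. smat_mult 2 (U k0) (U i) a b = smat_mult 2 (U i) (U k0) a b"
      using cm k0 i by blast
    from joint_diag_one[OF v e1 e2 nd uU[rule_format, OF i] this]
    show "\<exists>\<mu> \<nu>. P i \<mu> \<nu>" unfolding P_def .
  qed
  then have "\<exists>f. \<forall>i\<in>I. \<exists>\<nu>. P i (f i) \<nu>" by (rule bchoice)
  then obtain f where "\<forall>i\<in>I. \<exists>\<nu>. P i (f i) \<nu>" by (elim exE)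
  then have "\<exists>g. \<forall>i\<in>I. P i (f i) (g i)" by (rule bchoice)
  then obtain g where "\<forall>i\<in>I. P i (f i) (g i)" by (elim exE)
  then have f: "\<forall>i\<in>I. cnj (f i) * f i = 1 \<and> cnj (g i) * g i = 1 \<and>
     (\<forall>a<2. \<forall>b<2. U i a b = (\<Sum>k<2. vmat v0 v1 a k * (if k = 0 then f i else g i) * cnj (vmat v0 v1 b k)))"
    unfolding P_def .
  define L where "L = (\<lambda>i (k::nat). if k = 0 then f i else g i)"
  have "unitary_smat 2 (vmat v0 v1)" by (rule vmat_unitary[OF v])
  moreover have "\<forall>i\<in>I. \<forall>k<2. cnj (L i k) * L i k = 1" using f unfolding L_def all2 by simp
  moreover have "\<forall>i\<in>I. \<forall>a<2. \<forall>b<2. U i a b = (\<Sum>k<2. vmat v0 v1 a k * L i k * cnj (vmat v0 v1 b k))"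
    using f unfolding L_def by simp
  ultimately show ?thesis by blast
next
  case False
  define L where "L = (\<lambda>i (k::nat). U i k k)"
  have "unitary_smat 2 Id2" unfolding unitary_smat_def all2 sum2 Id2_def by simp
  moreover have "\<forall>i\<in>I. \<forall>k<2. cnj (L i k) * L i k = 1"
  proof (intro ballI)
    fix i assume i: "i \<in> I"
    note h = unit_eqs[OF uU[rule_format, OF i]]
    show "\<forall>k<2. cnj (L i k) * L i k = 1" using h(1) h(4) False i unfolding all2 L_def by auto
  qed
  moreover have "\<forall>i\<in>I. \<forall>a<2. \<forall>b<2. U i a b = (\<Sum>k<2. Id2 a k * L i k * cnj (Id2 b k))"
    using False unfolding all2 sum2 Id2_def L_def by auto
  ultimately show ?thesis by blast
qed

lemma set4: "{..<(4::nat)} = {0,1,2,3}" by auto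

lemma sum4: "(\<Sum>k<(4::nat). f k) = f 0 + (f 1 + (f 2 + f 3))"
  unfolding set4 by simp

lemma all4: "(\<forall>a<(4::nat). P a) \<longleftrightarrow> P 0 \<and> P 1 \<and> P 2 \<and> P 3"
proof -
  have "(\<forall>a<(4::nat). P a) = (\<forall>a\<in>{..<4}. P a)" by auto
  then show ?thesis unfolding set4 by simp
qed

lemma layer2_map:
  assumes "distinct js"
  shows "layer_op (map (\<lambda>j. ([a j, b j], M j)) js) x y =
    (if (\<forall>q. q \<notin> (\<Union>j\<in>set js. {a j, b j}) \<longrightarrow> x q = y q)
     then (\<Prod>j\<in>set js. M j (enc [a j, b j] x) (enc [a j, b j] y)) else 0)"
proof -
  have s: "(\<Union>g\<in>set (map (\<lambda>j. ([a j, b j], M j)) js). set (fst g)) = (\<Union>j\<in>set js. {a j, b j})" by auto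
  have p: "(\<Prod>g\<leftarrow>map (\<lambda>j. ([a j, b j], M j)) js. snd g (enc (fst g) x) (enc (fst g) y))
       = (\<Prod>j\<in>set js. M j (enc [a j, b j] x) (enc [a j, b j] y))"
    using assms by (simp add: prod.distinct_set_conv_list comp_def)
  show ?thesis unfolding layer_op_def s p ..
qed

definition cnotm :: smat where
  "cnotm = (\<lambda>i j. if (i = 0 \<and> j = 0) \<or> (i = 1 \<and> j = 1) \<or> (i = 2 \<and> j = 3) \<or> (i = 3 \<and> j = 2) then 1 else 0)"

lemma cnot_val: "cnotm ((if p then 2 else 0) + (if q then 1 else 0)) ((if p' then 2 else 0) + (if q' then 1 else 0))
   = (if p' = p \<and> q' = (q \<noteq> p) then 1 else 0)"
  unfolding cnotm_def by (cases p; cases q; cases p'; cases q') simp_all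

lemma prod_indicator:
  assumes "finite S"
  shows "(\<Prod>j\<in>S. if P j then 1 else 0) = (if \<forall>j\<in>S. P j then 1 else (0::complex))"
proof (cases "\<forall>j\<in>S. P j")
  case True
  then show ?thesis by simp
next
  case False
  then obtain j where "j \<in> S" "\<not> P j" by blast
  then show ?thesis using assms False by (simp add: prod_zero_iff)
qed

definition cf :: "(nat \<Rightarrow> nat) \<Rightarrow> (nat \<Rightarrow> nat) \<Rightarrow> nat list \<Rightarrow> bits \<Rightarrow> bits" where
  "cf a b js x = (\<lambda>q. if q \<in> b ` set js then x q \<noteq> x (a (inv_into (set js) b q)) else x q)"

lemma cnot_layer:
  assumes "distinct js" "inj_on b (set js)" "\<forall>j\<in>set js. \<forall>j'\<in>set js. a j \<noteq> b j'"
  shows "layer_op (map (\<lambda>j. ([a j, b j], cnotm)) js) x y = (if y = cf a b js x then 1 else 0)"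
proof -
  have "layer_op (map (\<lambda>j. ([a j, b j], cnotm)) js) x y =
    (if (\<forall>q. q \<notin> (\<Union>j\<in>set js. {a j, b j}) \<longrightarrow> x q = y q)
     then (\<Prod>j\<in>set js. if y (a j) = x (a j) \<and> y (b j) = (x (b j) \<noteq> x (a j)) then 1 else 0) else 0)"
    unfolding layer2_map[OF assms(1)] enc2 cnot_val ..
  also have "\<dots> = (if (\<forall>q. q \<notin> (\<Union>j\<in>set js. {a j, b j}) \<longrightarrow> x q = y q) \<and>
       (\<forall>j\<in>set js. y (a j) = x (a j) \<and> y (b j) = (x (b j) \<noteq> x (a j))) then 1 else 0)"
    by (simp add: prod_indicator) blast
  also have "((\<forall>q. q \<notin> (\<Union>j\<in>set js. {a j, b j}) \<longrightarrow> x q = y q) \<and>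
       (\<forall>j\<in>set js. y (a j) = x (a j) \<and> y (b j) = (x (b j) \<noteq> x (a j)))) = (y = cf a b js x)"
  proof
    assume h: "(\<forall>q. q \<notin> (\<Union>j\<in>set js. {a j, b j}) \<longrightarrow> x q = y q) \<and>
       (\<forall>j\<in>set js. y (a j) = x (a j) \<and> y (b j) = (x (b j) \<noteq> x (a j)))"
    show "y = cf a b js x"
    proof
      fix q
      show "y q = cf a b js x q"
      proof (cases "q \<in> b ` set js")
        case True
        then obtain j where j: "j \<in> set js" "q = b j" by blast
        then have "inv_into (set js) b q = j" using assms(2) by simp
        then show ?thesis using h j True unfolding cf_def by simp
      next
        case False
        then have "cf a b js x q = x q" unfolding cf_def by simp
        moreover have "y q = x q"
        proof (cases "q \<in> a ` set js")
          case True
          then obtain j where j: "j \<in> set js" "q = a j" by blast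
          then show ?thesis using h by simp
        next
          case False
          then show ?thesis using h \<open>q \<notin> b ` set js\<close> by auto
        qed
        ultimately show ?thesis by simp
      qed
    qed
  next
    assume y: "y = cf a b js x"
    have na: "\<And>j. j \<in> set js \<Longrightarrow> a j \<notin> b ` set js" using assms(3) by auto
    show "(\<forall>q. q \<notin> (\<Union>j\<in>set js. {a j, b j}) \<longrightarrow> x q = y q) \<and>
       (\<forall>j\<in>set js. y (a j) = x (a j) \<and> y (b j) = (x (b j) \<noteq> x (a j)))"
      unfolding y cf_def using na assms(2) by auto
  qed
  finally show ?thesis .
qed

lemma apply_perm:
  assumes "\<And>y. y \<in> basis N \<Longrightarrow> Op x y = (if y = f x then 1 else 0)" "f x \<in> basis N"
  shows "apply_op N Op v x = v (f x)"
proof -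
  have "apply_op N Op v x = (\<Sum>y\<in>basis N. if f x = y then v y else 0)"
    unfolding apply_op_def by (rule sum.cong) (auto simp: assms(1))
  also have "\<dots> = v (f x)" using assms(2) finite_basis[of N] by (simp add: sum.delta)
  finally show ?thesis .
qed

definition dm :: "(bool \<Rightarrow> complex) \<Rightarrow> smat" where
  "dm \<alpha> = (\<lambda>i j. if i = j then (if i = 2 then \<alpha> False else if i = 3 then \<alpha> True else 1) else 0)"

lemma dm_val: "dm \<alpha> ((if p then 2 else 0) + (if q then 1 else 0)) ((if p' then 2 else 0) + (if q' then 1 else 0))
   = (if p = p' \<and> q = q' then (if p then \<alpha> q else 1) else 0)"
  unfolding dm_def by (cases p; cases q; cases p'; cases q') simp_all

lemma diag_layer:
  assumes "distinct js"
  shows "layer_op (map (\<lambda>j. ([a j, b j], dm (\<alpha> j))) js) x y =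
     (if y = x then (\<Prod>j\<in>set js. if x (a j) then \<alpha> j (x (b j)) else 1) else 0)"
proof -
  have e: "layer_op (map (\<lambda>j. ([a j, b j], dm (\<alpha> j))) js) x y =
    (if (\<forall>q. q \<notin> (\<Union>j\<in>set js. {a j, b j}) \<longrightarrow> x q = y q)
     then (\<Prod>j\<in>set js. if x (a j) = y (a j) \<and> x (b j) = y (b j) then (if x (a j) then \<alpha> j (x (b j)) else 1) else 0) else 0)"
    unfolding layer2_map[OF assms(1)] enc2 dm_val ..
  show ?thesis
  proof (cases "y = x")
    case True
    then show ?thesis unfolding e by simp
  next
    case False
    then obtain q where q: "x q \<noteq> y q" by auto
    show ?thesis
    proof (cases "q \<in> (\<Union>j\<in>set js. {a j, b j})")
      case True
      then obtain j where j: "j \<in> set js" "q = a j \<or> q = b j" by blast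
      have "(\<Prod>j\<in>set js. if x (a j) = y (a j) \<and> x (b j) = y (b j) then (if x (a j) then \<alpha> j (x (b j)) else 1) else 0) = 0"
        using j q by (subst prod_zero_iff) auto
      then show ?thesis unfolding e using False by simp
    next
      case False
      then show ?thesis unfolding e using q \<open>y \<noteq> x\<close> by auto
    qed
  qed
qed

lemma apply_diag:
  assumes "\<And>y. y \<in> basis N \<Longrightarrow> Op x y = (if y = x then d else 0)" "x \<in> basis N"
  shows "apply_op N Op v x = d * v x"
proof -
  have "apply_op N Op v x = (\<Sum>y\<in>basis N. if x = y then d * v y else 0)"
    unfolding apply_op_def by (rule sum.cong) (auto simp: assms(1))
  also have "\<dots> = d * v x" using assms(2) finite_basis[of N] by (simp add: sum.delta)
  finally show ?thesis .
qed

lemma cnot_unitary: "unitary_smat 4 cnotm"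
  unfolding unitary_smat_def all4 sum4 cnotm_def by simp

lemma dm_unitary: "cnj (\<alpha> False) * \<alpha> False = 1 \<Longrightarrow> cnj (\<alpha> True) * \<alpha> True = 1 \<Longrightarrow> unitary_smat 4 (dm \<alpha>)"
  unfolding unitary_smat_def all4 sum4 dm_def by (simp add: mult.commute)

lemma valid_layer_map:
  assumes "distinct js" "\<forall>j\<in>set js. valid_gate N (h j)"
    "\<forall>j\<in>set js. \<forall>j'\<in>set js. j \<noteq> j' \<longrightarrow> set (fst (h j)) \<inter> set (fst (h j')) = {}"
  shows "valid_layer N (map h js)"
  unfolding valid_layer_def
proof (intro conjI allI impI ballI)
  fix g assume "g \<in> set (map h js)"
  then show "valid_gate N g" using assms(2) by auto
next
  fix i j assume "i < length (map h js)" "j < length (map h js)" "i \<noteq> j"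
  then show "set (fst (map h js ! i)) \<inter> set (fst (map h js ! j)) = {}"
    using assms(1,3) by (simp add: nth_eq_iff_index_eq)
qed

lemma valid_gate2: "a \<noteq> b \<Longrightarrow> a < N \<Longrightarrow> b < N \<Longrightarrow> unitary_smat 4 M \<Longrightarrow> valid_gate N ([a, b], M)"
  unfolding valid_gate_def by simp

lemma valid_gate1: "a < N \<Longrightarrow> unitary_smat 2 M \<Longrightarrow> valid_gate N ([a], M)"
  unfolding valid_gate_def by simp

lemma valid_layer1: "valid_gate N g \<Longrightarrow> valid_layer N [g]"
  unfolding valid_layer_def by simp

definition pp :: "nat \<Rightarrow> nat \<Rightarrow> nat \<Rightarrow> nat" where "pp n' t j = (if j = 0 then t else n' + (j - 1))"
definition jsr :: "nat \<Rightarrow> nat \<Rightarrow> nat list" where "jsr n r = filter (\<lambda>j. j + 2^r \<le> n) [0..<2^r]"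
definition FL :: "nat \<Rightarrow> nat \<Rightarrow> nat \<Rightarrow> nat \<Rightarrow> gate list" where
  "FL n n' t r = map (\<lambda>j. ([pp n' t j, pp n' t (j + 2^r)], cnotm)) (jsr n r)"
definition Ff :: "nat \<Rightarrow> nat \<Rightarrow> nat \<Rightarrow> nat \<Rightarrow> bits \<Rightarrow> bits" where
  "Ff n n' t r = cf (pp n' t) (\<lambda>j. pp n' t (j + 2^r)) (jsr n r)"
definition st :: "nat \<Rightarrow> nat \<Rightarrow> nat \<Rightarrow> nat \<Rightarrow> bits \<Rightarrow> bits" where
  "st n n' t r z = (\<lambda>q. if n' \<le> q \<and> q < n' + n then (q + 1 - n' < 2^r \<and> z t) else z q)"

lemma set_jsr: "set (jsr n r) = {j. j < 2^r \<and> j + 2^r \<le> n}"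
  unfolding jsr_def by auto

lemma distinct_jsr: "distinct (jsr n r)"
  unfolding jsr_def by simp

lemma pp_tgt: "pp n' t (j + 2^r) = n' + (j + 2^r - 1)"
  unfolding pp_def by simp

lemma inj_tgt: "inj_on (\<lambda>j. pp n' t (j + 2^r)) A"
proof (rule inj_onI)
  fix x y assume "pp n' t (x + 2^r) = pp n' t (y + 2^r)"
  moreover have "(2::nat)^r \<ge> 1" by simp
  ultimately show "x = y" unfolding pp_tgt by linarith
qed

lemma ctl_ne_tgt:
  assumes "t < n'" "j < 2^r" "j' < 2^r"
  shows "pp n' t j \<noteq> pp n' t (j' + 2^r)"
  using assms unfolding pp_def by auto

lemma FL_layer:
  assumes "t < n'"
  shows "layer_op (FL n n' t r) x y = (if y = Ff n n' t r x then 1 else 0)"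
  unfolding FL_def Ff_def
  by (rule cnot_layer[OF distinct_jsr inj_tgt]) (use ctl_ne_tgt[OF assms] in \<open>auto simp: set_jsr\<close>)

lemma cf_basis:
  assumes "x \<in> basis N" "\<forall>j\<in>set js. b j < N"
  shows "cf a b js x \<in> basis N"
  using assms unfolding basis_def cf_def by auto

lemma Ff_basis:
  assumes "x \<in> basis (n' + n)"
  shows "Ff n n' t r x \<in> basis (n' + n)"
  unfolding Ff_def by (rule cf_basis[OF assms]) (auto simp: set_jsr pp_tgt)

lemma cf_invol:
  assumes "\<forall>j\<in>set js. \<forall>j'\<in>set js. a j \<noteq> b j'"
  shows "cf a b js (cf a b js x) = x"
proof
  fix q
  have na: "\<And>j. j \<in> set js \<Longrightarrow> a j \<notin> b ` set js" using assms by auto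
  show "cf a b js (cf a b js x) q = x q"
  proof (cases "q \<in> b ` set js")
    case True
    then obtain j where j: "j \<in> set js" "q = b j" by blast
    have "inv_into (set js) b q \<in> set js" using True by (simp add: inv_into_into)
    then have "a (inv_into (set js) b q) \<notin> b ` set js" by (rule na)
    then show ?thesis using True unfolding cf_def by auto
  next
    case False
    then show ?thesis unfolding cf_def by simp
  qed
qed

lemma Ff_invol:
  assumes "t < n'"
  shows "Ff n n' t r (Ff n n' t r x) = x"
  unfolding Ff_def
  by (rule cf_invol) (use ctl_ne_tgt[OF assms] in \<open>auto simp: set_jsr\<close>)

lemma Ff_step:
  assumes "t < n'" "\<forall>q. n' \<le> q \<and> q < n' + n \<longrightarrow> \<not> z q"
  shows "Ff n n' t r (st n n' t r z) = st n n' t (Suc r) z"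
proof
  fix q
  let ?b = "\<lambda>j. pp n' t (j + 2^r)"
  show "Ff n n' t r (st n n' t r z) q = st n n' t (Suc r) z q"
  proof (cases "q \<in> ?b ` set (jsr n r)")
    case True
    then obtain j where j: "j \<in> set (jsr n r)" "q = ?b j" by blast
    have jl: "j < 2^r" "j + 2^r \<le> n" using j(1) by (auto simp: set_jsr)
    have q: "q = n' + (j + 2^r - 1)" using j(2) by (simp add: pp_tgt)
    have inv: "inv_into (set (jsr n r)) ?b q = j"
      by (rule inv_into_f_eq[OF inj_tgt j(1) j(2)[symmetric]])
    have p2: "(2::nat)^r \<ge> 1" by simp
    have s1: "st n n' t r z q = False" unfolding st_def q using jl p2 by auto
    have s2: "st n n' t r z (pp n' t j) = z t"
    proof (cases "j = 0")
      case True
      then show ?thesis using assms(1) unfolding st_def pp_def by simp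
    next
      case False
      then show ?thesis using jl unfolding st_def pp_def by auto
    qed
    have s3: "st n n' t (Suc r) z q = z t" unfolding st_def q using jl p2 by auto
    show ?thesis unfolding Ff_def cf_def using True inv s1 s2 s3 by simp
  next
    case False
    have "st n n' t r z q = st n n' t (Suc r) z q"
    proof (cases "n' \<le> q \<and> q < n' + n")
      case True
      define i where "i = q + 1 - n'"
      have i1: "1 \<le> i" "i \<le> n" "q = n' + (i - 1)" using True unfolding i_def by auto
      consider "i < 2^r" | "2^Suc r \<le> i" | "2^r \<le> i \<and> i < 2^Suc r" by linarith
      then show ?thesis
      proof cases
        case 1
        then have "q + 1 - n' < 2^r" "q + 1 - n' < 2^Suc r" unfolding i_def by auto
        then show ?thesis using True unfolding st_def by simp
      next
        case 2
        then have "\<not> q + 1 - n' < 2^r" "\<not> q + 1 - n' < 2^Suc r" unfolding i_def by auto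
        then show ?thesis using True unfolding st_def by simp
      next
        case 3
        define j where "j = i - 2^r"
        have "j \<in> set (jsr n r)" using 3 i1 unfolding j_def set_jsr by auto
        moreover have "q = ?b j" using 3 i1 unfolding j_def pp_tgt by simp
        ultimately have "q \<in> ?b ` set (jsr n r)" by blast
        then show ?thesis using False by blast
      qed
    next
      case False
      then show ?thesis unfolding st_def by auto
    qed
    then show ?thesis using False unfolding Ff_def cf_def by simp
  qed
qed

lemma st0: "\<forall>q. n' \<le> q \<and> q < n' + n \<longrightarrow> \<not> z q \<Longrightarrow> st n n' t 0 z = z"
  unfolding st_def by auto

lemma fold_st:
  assumes "t < n'" "\<forall>q. n' \<le> q \<and> q < n' + n \<longrightarrow> \<not> z q"
  shows "fold (Ff n n' t) [0..<R] z = st n n' t R z"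
proof (induction R)
  case 0
  then show ?case using st0[OF assms(2)] by simp
next
  case (Suc R)
  then show ?case using Ff_step[OF assms] by simp
qed

lemma fold_inv:
  assumes "t < n'"
  shows "fold (Ff n n' t) (rev rs) (fold (Ff n n' t) rs z) = z"
proof (induction rs arbitrary: z rule: rev_induct)
  case Nil
  then show ?case by simp
next
  case (snoc r rs)
  then show ?case using Ff_invol[OF assms] by simp
qed

lemma fanout_apply:
  assumes "t < n'" "x \<in> basis (n' + n)"
  shows "foldr (apply_op (n' + n)) (map (\<lambda>r. layer_op (FL n n' t r)) rs) w x = w (fold (Ff n n' t) rs x)"
  using assms(2)
proof (induction rs arbitrary: x)
  case Nil
  then show ?case by simp
next
  case (Cons r rs)
  have "foldr (apply_op (n' + n)) (map (\<lambda>r. layer_op (FL n n' t r)) (r # rs)) w x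
     = apply_op (n' + n) (layer_op (FL n n' t r)) (foldr (apply_op (n' + n)) (map (\<lambda>r. layer_op (FL n n' t r)) rs) w) x"
    by simp
  also have "\<dots> = foldr (apply_op (n' + n)) (map (\<lambda>r. layer_op (FL n n' t r)) rs) w (Ff n n' t r x)"
    by (rule apply_perm) (auto simp: FL_layer[OF assms(1)] Ff_basis Cons.prems)
  also have "\<dots> = w (fold (Ff n n' t) rs (Ff n n' t r x))"
    by (rule Cons.IH) (rule Ff_basis[OF Cons.prems])
  finally show ?case by simp
qed

lemma FL_valid:
  assumes "t < n'"
  shows "valid_layer (n' + n) (FL n n' t r)"
  unfolding FL_def
proof (rule valid_layer_map[OF distinct_jsr])
  show "\<forall>j\<in>set (jsr n r). valid_gate (n' + n) ([pp n' t j, pp n' t (j + 2 ^ r)], cnotm)"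
  proof
    fix j assume j: "j \<in> set (jsr n r)"
    then have jl: "j < 2^r" "j + 2^r \<le> n" by (auto simp: set_jsr)
    have p2: "(2::nat)^r \<ge> 1" by simp
    show "valid_gate (n' + n) ([pp n' t j, pp n' t (j + 2 ^ r)], cnotm)"
    proof (rule valid_gate2)
      show "pp n' t j \<noteq> pp n' t (j + 2 ^ r)" by (rule ctl_ne_tgt[OF assms jl(1) jl(1)])
      show "pp n' t j < n' + n" using assms jl p2 unfolding pp_def by auto
      show "pp n' t (j + 2 ^ r) < n' + n" using jl p2 unfolding pp_tgt by auto
      show "unitary_smat 4 cnotm" by (rule cnot_unitary)
    qed
  qed
  show "\<forall>j\<in>set (jsr n r). \<forall>j'\<in>set (jsr n r). j \<noteq> j' \<longrightarrow>
      set (fst ([pp n' t j, pp n' t (j + 2 ^ r)], cnotm)) \<inter> set (fst ([pp n' t j', pp n' t (j' + 2 ^ r)], cnotm)) = {}"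
  proof (intro ballI impI)
    fix j j' assume j: "j \<in> set (jsr n r)" and j': "j' \<in> set (jsr n r)" and ne: "j \<noteq> j'"
    have jl: "j < 2^r" "j' < 2^r" using j j' by (auto simp: set_jsr)
    have "pp n' t j \<noteq> pp n' t j'" using ne assms unfolding pp_def by auto
    moreover have "pp n' t (j + 2^r) \<noteq> pp n' t (j' + 2^r)"
      using ne inj_tgt[of n' t r UNIV] unfolding inj_on_def by blast
    ultimately show "set (fst ([pp n' t j, pp n' t (j + 2 ^ r)], cnotm)) \<inter> set (fst ([pp n' t j', pp n' t (j' + 2 ^ r)], cnotm)) = {}"
      using ctl_ne_tgt[OF assms jl(1) jl(2)] ctl_ne_tgt[OF assms jl(2) jl(1)] by auto
  qed
qed

lemma Pm_diag:
  assumes uV: "unitary_smat 2 V"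
    and dec: "\<forall>i\<in>set is. \<forall>a<2. \<forall>b<2. U i a b = (\<Sum>k<2. V a k * L i k * cnj (V b k))"
    and ab: "a < 2" "b < 2"
  shows "Pm c U x is a b = (\<Sum>k<2. V a k * (\<Prod>i\<leftarrow>is. if x (c i) then L i k else 1) * cnj (V b k))"
  using dec ab
proof (induction "is" arbitrary: a b)
  case Nil
  note h = unit_eqs[OF uV]
  show ?case using Nil.prems(2,3) h(5-8) unfolding sum2 Id2_def all2
    by (auto simp: less_2_cases_iff Id2_def)
next
  case (Cons i "is")
  note h = unit_eqs[OF uV]
  have IH0: "Pm c U x is 0 b = (\<Sum>k<2. V 0 k * (\<Prod>i\<leftarrow>is. if x (c i) then L i k else 1) * cnj (V b k))"
    using Cons.IH[of 0 b] Cons.prems by simp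
  have IH1: "Pm c U x is 1 b = (\<Sum>k<2. V 1 k * (\<Prod>i\<leftarrow>is. if x (c i) then L i k else 1) * cnj (V b k))"
    using Cons.IH[of 1 b] Cons.prems by simp
  define P0 where "P0 = (\<Prod>i\<leftarrow>is. if x (c i) then L i 0 else 1)"
  define P1 where "P1 = (\<Prod>i\<leftarrow>is. if x (c i) then L i 1 else 1)"
  show ?case
  proof (cases "x (c i)")
    case True
    have Ui: "\<forall>a<2. \<forall>b<2. U i a b = (\<Sum>k<2. V a k * L i k * cnj (V b k))" using Cons.prems(1) by simp
    have "Pm c U x (i # is) a b = U i a 0 * Pm c U x is 0 b + U i a 1 * Pm c U x is 1 b"
      using True by (simp add: smat_mult_def sum2)
    also have "\<dots> = (V a 0 * L i 0 * cnj (V 0 0) + V a 1 * L i 1 * cnj (V 0 1)) * (V 0 0 * P0 * cnj (V b 0) + V 0 1 * P1 * cnj (V b 1))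
         + (V a 0 * L i 0 * cnj (V 1 0) + V a 1 * L i 1 * cnj (V 1 1)) * (V 1 0 * P0 * cnj (V b 0) + V 1 1 * P1 * cnj (V b 1))"
      using Ui Cons.prems(2) unfolding IH0 IH1 P0_def P1_def sum2 by simp
    also have "\<dots> = V a 0 * L i 0 * P0 * cnj (V b 0) * (cnj (V 0 0) * V 0 0 + cnj (V 1 0) * V 1 0)
       + V a 0 * L i 0 * P1 * cnj (V b 1) * (cnj (V 0 0) * V 0 1 + cnj (V 1 0) * V 1 1)
       + V a 1 * L i 1 * P0 * cnj (V b 0) * (cnj (V 0 1) * V 0 0 + cnj (V 1 1) * V 1 0)
       + V a 1 * L i 1 * P1 * cnj (V b 1) * (cnj (V 0 1) * V 0 1 + cnj (V 1 1) * V 1 1)"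
      by (simp add: algebra_simps)
    also have "\<dots> = V a 0 * (L i 0 * P0) * cnj (V b 0) + V a 1 * (L i 1 * P1) * cnj (V b 1)"
      by (simp only: h(1-4)) (simp add: algebra_simps)
    also have "\<dots> = (\<Sum>k<2. V a k * (\<Prod>i\<leftarrow>i # is. if x (c i) then L i k else 1) * cnj (V b k))"
      using True unfolding P0_def P1_def sum2 by simp
    finally show ?thesis .
  next
    case False
    have "Pm c U x (i # is) a b = Pm c U x is a b"
      using False Cons.prems(2) by (auto simp: smat_mult_def sum2 Id2_def less_2_cases_iff)
    also have "\<dots> = (\<Sum>k<2. V a k * (\<Prod>i\<leftarrow>is. if x (c i) then L i k else 1) * cnj (V b k))"
      using Cons.IH[of a b] Cons.prems by simp
    finally show ?thesis using False by simp
  qed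
qed

definition DL :: "nat \<Rightarrow> nat list \<Rightarrow> (nat \<Rightarrow> bool \<Rightarrow> complex) \<Rightarrow> gate list" where
  "DL n' qs \<alpha> = map (\<lambda>j. ([qs ! j, n' + j], dm (\<alpha> j))) [0..<length qs]"

lemma DL_layer: "layer_op (DL n' qs \<alpha>) x y =
   (if y = x then (\<Prod>j\<in>{0..<length qs}. if x (qs ! j) then \<alpha> j (x (n' + j)) else 1) else 0)"
  unfolding DL_def by (subst diag_layer) simp_all

lemma DL_valid:
  assumes "distinct qs" "\<forall>q\<in>set qs. q < n'" "length qs \<le> n"
    "\<forall>j<length qs. \<forall>b. cnj (\<alpha> j b) * \<alpha> j b = 1"
  shows "valid_layer (n' + n) (DL n' qs \<alpha>)"
  unfolding DL_def
proof (rule valid_layer_map)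
  show "\<forall>j\<in>set [0..<length qs]. valid_gate (n' + n) ([qs ! j, n' + j], dm (\<alpha> j))"
  proof
    fix j assume "j \<in> set [0..<length qs]"
    then have j: "j < length qs" by simp
    then have q: "qs ! j < n'" using assms(2) nth_mem by blast
    show "valid_gate (n' + n) ([qs ! j, n' + j], dm (\<alpha> j))"
      by (rule valid_gate2) (use q j assms(3,4) in \<open>auto intro: dm_unitary\<close>)
  qed
  show "\<forall>j\<in>set [0..<length qs]. \<forall>j'\<in>set [0..<length qs]. j \<noteq> j' \<longrightarrow>
      set (fst ([qs ! j, n' + j], dm (\<alpha> j))) \<inter> set (fst ([qs ! j', n' + j'], dm (\<alpha> j'))) = {}"
  proof (intro ballI impI)
    fix j j' assume j: "j \<in> set [0..<length qs]" and j': "j' \<in> set [0..<length qs]" and ne: "j \<noteq> j'"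
    have "qs ! j < n'" "qs ! j' < n'" using j j' assms(2) nth_mem by auto
    moreover have "qs ! j \<noteq> qs ! j'" using j j' ne assms(1) by (simp add: nth_eq_iff_index_eq)
    ultimately show "set (fst ([qs ! j, n' + j], dm (\<alpha> j))) \<inter> set (fst ([qs ! j', n' + j'], dm (\<alpha> j'))) = {}"
      using ne by auto
  qed
qed simp

lemma apply_prod_foldr:
  assumes "x \<in> basis N"
  shows "apply_op N (op_prod N As) v x = foldr (apply_op N) As v x"
  using assms
proof (induction As arbitrary: x)
  case Nil
  then show ?case by (simp add: op_prod_def apply_id)
next
  case (Cons A As)
  have "apply_op N (op_prod N (A # As)) v x = apply_op N A (apply_op N (op_prod N As) v) x"
    by (rule apply_prod_Cons)
  also have "\<dots> = apply_op N A (foldr (apply_op N) As v) x"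
    by (rule apply_cong) (rule Cons.IH)
  finally show ?case by simp
qed

lemma fold_basis:
  assumes "x \<in> basis (n' + n)"
  shows "fold (Ff n n' t) rs x \<in> basis (n' + n)"
  using assms
proof (induction rs arbitrary: x)
  case Nil
  then show ?case by simp
next
  case (Cons r rs)
  then show ?case using Ff_basis by simp
qed

lemma regroup:
  fixes f :: "nat \<Rightarrow> complex"
  assumes "finite S" "qs = sorted_list_of_set (c ` S)"
  shows "(\<Prod>j\<in>{0..<length qs}. if x (qs ! j) then (\<Prod>i\<in>{i\<in>S. c i = qs ! j}. f i) else 1)
       = (\<Prod>i\<in>S. if x (c i) then f i else 1)"
proof -
  have d: "distinct qs" and sq: "set qs = c ` S" using assms by auto
  define G where "G = (\<lambda>q. if x q then (\<Prod>i\<in>{i\<in>S. c i = q}. f i) else 1)"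
  have im: "nth qs ` {0..<length qs} = set qs" by (auto simp: in_set_conv_nth)
  have inj: "inj_on (nth qs) {0..<length qs}" by (rule inj_on_nth[OF d]) simp
  have "(\<Prod>j\<in>{0..<length qs}. if x (qs ! j) then (\<Prod>i\<in>{i\<in>S. c i = qs ! j}. f i) else 1)
      = (\<Prod>j\<in>{0..<length qs}. G (qs ! j))" unfolding G_def ..
  also have "\<dots> = (\<Prod>q\<in>set qs. G q)"
    using prod.reindex[OF inj, of G] im by simp
  also have "\<dots> = (\<Prod>q\<in>c ` S. \<Prod>i\<in>{i\<in>S. c i = q}. if x (c i) then f i else 1)"
    unfolding sq G_def by (rule prod.cong) auto
  also have "\<dots> = (\<Prod>i\<in>S. if x (c i) then f i else 1)"
    by (rule prod.image_gen[symmetric, OF assms(1)])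
  finally show ?thesis .
qed

lemma prod_list_rev_upt:
  "(\<Prod>i\<leftarrow>rev [1..<n+1]. f i) = (\<Prod>i\<in>{1..n}. (f i :: complex))"
proof -
  have "(\<Prod>i\<in>set (rev [1..<n+1]). f i) = (\<Prod>i\<leftarrow>rev [1..<n+1]. f i)"
    by (rule prod.distinct_set_conv_list) simp
  moreover have "set (rev [1..<n+1]) = {1..n}" by auto
  ultimately show ?thesis by simp
qed

lemma unitary_adj: "unitary_smat 2 V \<Longrightarrow> unitary_smat 2 (\<lambda>i j. cnj (V j i))"
  unfolding unitary_smat_def by simp

lemma main_constr:
  fixes n n' t :: nat and c :: "nat \<Rightarrow> nat" and U :: "nat \<Rightarrow> smat"
  assumes n2: "n \<ge> 2" and tn: "t < n'" and cc: "\<forall>i\<in>{1..n}. c i < n' \<and> c i \<noteq> t"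
    and uU: "\<forall>i\<in>{1..n}. unitary_smat 2 (U i)"
    and cm: "\<forall>i\<in>{1..n}. \<forall>j\<in>{1..n}. \<forall>a<2. \<forall>b<2. smat_mult 2 (U i) (U j) a b = smat_mult 2 (U j) (U i) a b"
  shows "\<exists>m Ls. real m \<le> 7 * real n \<and> valid_circuit (n' + m) Ls \<and> real (length Ls) \<le> 7 * log 2 (real n) \<and>
          embeds n' (op_prod n' (map (\<lambda>i. cgate_op (c i) t (U i)) (rev [1..<n+1]))) m (circuit_op (n' + m) Ls)"
proof -
  obtain V L where uV: "unitary_smat 2 V" and Lu: "\<forall>i\<in>{1..n}. \<forall>k<2. cnj (L i k) * L i k = 1"
    and dec: "\<forall>i\<in>{1..n}. \<forall>a<2. \<forall>b<2. U i a b = (\<Sum>k<2. V a k * L i k * cnj (V b k))"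
    using diag_simul[OF uU cm] by blast
  define Vd where "Vd = (\<lambda>i j. cnj (V j i))"
  obtain R0 where R0: "2^R0 \<le> n" "n < 2^(R0+1)" using ex_power_ivl1[of 2 n] n2 by auto
  define R where "R = R0 + 1"
  define qs where "qs = sorted_list_of_set (c ` {1..n})"
  define \<alpha> where "\<alpha> = (\<lambda>j b. \<Prod>i\<in>{i\<in>{1..n}. c i = qs ! j}. L i (bt b))"
  define Ls where "Ls = [[([t], V)]] @ map (FL n n' t) [0..<R] @ [DL n' qs \<alpha>] @ map (FL n n' t) (rev [0..<R]) @ [[([t], Vd)]]"
  have sq: "set qs = c ` {1..n}" and dq: "distinct qs" unfolding qs_def by auto
  have lq: "length qs \<le> n"
  proof -
    have "length qs = card (c ` {1..n})" using dq sq distinct_card by fastforce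
    also have "\<dots> \<le> card {1..n}" by (rule card_image_le) simp
    finally show ?thesis by simp
  qed
    have A1: "real n \<le> 7 * real n" by simp
    have A2: "valid_circuit (n' + n) Ls"
      unfolding valid_circuit_def
    proof
      fix Ly assume "Ly \<in> set Ls"
      then consider "Ly = [([t], V)]" | "Ly = [([t], Vd)]" | "Ly = DL n' qs \<alpha>" | "\<exists>r. Ly = FL n n' t r"
        unfolding Ls_def by auto
      then show "valid_layer (n' + n) Ly"
      proof cases
        case 1
        then show ?thesis using tn uV by (auto intro!: valid_layer1 valid_gate1)
      next
        case 2
        then show ?thesis using tn unitary_adj[OF uV] unfolding Vd_def by (auto intro!: valid_layer1 valid_gate1)
      next
        case 3
        have au: "\<forall>j<length qs. \<forall>b. cnj (\<alpha> j b) * \<alpha> j b = 1"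
        proof (intro allI impI)
          fix j b assume "j < length qs"
          have "cnj (\<alpha> j b) * \<alpha> j b = (\<Prod>i\<in>{i\<in>{1..n}. c i = qs ! j}. cnj (L i (bt b)) * L i (bt b))"
            unfolding \<alpha>_def by (simp add: prod.distrib)
          also have "\<dots> = 1" using Lu by (intro prod.neutral) (auto simp: bt_def)
          finally show "cnj (\<alpha> j b) * \<alpha> j b = 1" .
        qed
        have "\<forall>q\<in>set qs. q < n'" using sq cc by auto
        then show ?thesis unfolding 3 using DL_valid[OF dq _ lq au] by blast
      next
        case 4
        then show ?thesis using FL_valid[OF tn] by auto
      qed
    qed
    have A3: "real (length Ls) \<le> 7 * log 2 (real n)"
    proof -
      have len: "length Ls = 2 * R0 + 5" unfolding Ls_def R_def by simp
      have l1: "real R0 \<le> log 2 (real n)" by (rule le_log2_of_power[OF R0(1)])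
      have l2: "real 1 \<le> log 2 (real n)" by (rule le_log2_of_power) (use n2 in simp)
      show ?thesis unfolding len using l1 l2 by simp
    qed
    have A4: "embeds n' (op_prod n' (map (\<lambda>i. cgate_op (c i) t (U i)) (rev [1..<n+1]))) n (circuit_op (n' + n) Ls)"
      unfolding embeds_def
    proof (intro allI ballI)
      fix psi and x assume x: "x \<in> basis (n' + n)"
      define v0 where "v0 = with_ancillae n' n psi"
      define W1 where "W1 = apply_op (n'+n) (layer_op [([t], Vd)]) v0"
      define W2 where "W2 = foldr (apply_op (n'+n)) (map (\<lambda>r. layer_op (FL n n' t r)) (rev [0..<R])) W1"
      define W3 where "W3 = apply_op (n'+n) (layer_op (DL n' qs \<alpha>)) W2"
      define W4 where "W4 = foldr (apply_op (n'+n)) (map (\<lambda>r. layer_op (FL n n' t r)) [0..<R]) W3"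
      define g1 where "g1 = fold (Ff n n' t) (rev [0..<R])"
      define g2 where "g2 = fold (Ff n n' t) [0..<R]"
      define d where "d = (\<lambda>w. \<Prod>j\<in>{0..<length qs}. if w (qs ! j) then \<alpha> j (w (n' + j)) else 1)"
      have tN: "t < n' + n" using tn by simp
      have e0: "apply_op (n'+n) (circuit_op (n'+n) Ls) v0 x = apply_op (n'+n) (layer_op [([t], V)]) W4 x"
        unfolding circuit_op_def apply_prod_foldr[OF x] W4_def W3_def W2_def W1_def Ls_def
        by (simp add: comp_def)
      have e1: "apply_op (n'+n) (layer_op [([t], V)]) W4 x = (\<Sum>k\<in>UNIV. V (bt (x t)) (bt k) * W4 (x(t:=k)))"
        by (rule tloc_apply[OF tN x]) (simp add: vlayer_eq)
      have eW1: "W1 u = (\<Sum>l\<in>UNIV. Vd (bt (u t)) (bt l) * v0 (u(t:=l)))" if "u \<in> basis (n'+n)" for u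
        unfolding W1_def by (rule tloc_apply[OF tN that]) (simp add: vlayer_eq)
      have eW2: "W2 w = W1 (g1 w)" if "w \<in> basis (n'+n)" for w
        unfolding W2_def g1_def by (rule fanout_apply[OF tn that])
      have eW3: "W3 w = d w * W2 w" if "w \<in> basis (n'+n)" for w
        unfolding W3_def d_def by (rule apply_diag[OF _ that]) (simp add: DL_layer)
      have eW4: "W4 z = W3 (g2 z)" if "z \<in> basis (n'+n)" for z
        unfolding W4_def g2_def by (rule fanout_apply[OF tn that])
      have gb: "g2 z \<in> basis (n'+n)" if "z \<in> basis (n'+n)" for z
        unfolding g2_def by (rule fold_basis[OF that])
      have gi: "g1 (g2 z) = z" for z unfolding g1_def g2_def by (rule fold_inv[OF tn])
      have eW4': "W4 (x(t:=k)) = d (g2 (x(t:=k))) * (\<Sum>l\<in>UNIV. Vd (bt k) (bt l) * v0 (x(t:=l)))" for k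
      proof -
        have z: "x(t:=k) \<in> basis (n'+n)" by (rule basis_upd[OF tN x])
        have "W4 (x(t:=k)) = d (g2 (x(t:=k))) * W1 (g1 (g2 (x(t:=k))))"
          using eW4[OF z] eW3[OF gb[OF z]] eW2[OF gb[OF z]] by simp
        also have "\<dots> = d (g2 (x(t:=k))) * W1 (x(t:=k))" by (simp only: gi)
        also have "W1 (x(t:=k)) = (\<Sum>l\<in>UNIV. Vd (bt k) (bt l) * v0 (x(t:=l)))" using eW1[OF z] by simp
        finally show ?thesis .
      qed
      show "apply_op (n' + n) (circuit_op (n' + n) Ls) (with_ancillae n' n psi) x =
            with_ancillae n' n (apply_op n' (op_prod n' (map (\<lambda>i. cgate_op (c i) t (U i)) (rev [1..<n+1]))) psi) x"
      proof (cases "\<forall>i\<in>{n'..<n'+n}. \<not> x i")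
        case False
        then have "v0 (x(t:=l)) = 0" for l unfolding v0_def with_ancillae_def using tn by auto
        then have "apply_op (n'+n) (circuit_op (n'+n) Ls) v0 x = 0" using e0 e1 eW4' by simp
        moreover have "with_ancillae n' n (apply_op n' (op_prod n' (map (\<lambda>i. cgate_op (c i) t (U i)) (rev [1..<n+1]))) psi) x = 0"
          unfolding with_ancillae_def by (rule if_not_P) (use False in blast)
        ultimately show ?thesis unfolding v0_def by simp
      next
        case True
        have az: "\<forall>q. n' \<le> q \<and> q < n'+n \<longrightarrow> \<not> x q" using True by auto
        have xb': "x \<in> basis n'" unfolding basis_def
        proof (intro CollectI allI impI)
          fix i assume i: "n' \<le> i"
          show "\<not> x i"
          proof (cases "i < n' + n")
            case True then show ?thesis using az i by blast
          next
            case False then show ?thesis using x unfolding basis_def by simp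
          qed
        qed
        have v0l: "v0 (x(t:=l)) = psi (x(t:=l))" for l unfolding v0_def with_ancillae_def using True tn by auto
        define \<Phi> where "\<Phi> = (\<lambda>k::nat. \<Prod>i\<in>{1..n}. if x (c i) then L i k else 1)"
        have nR: "n < 2^R" using R0(2) unfolding R_def by simp
        have dg: "d (g2 (x(t:=k))) = \<Phi> (bt k)" for k
        proof -
          have azk: "\<forall>q. n' \<le> q \<and> q < n'+n \<longrightarrow> \<not> (x(t:=k)) q" using az tn by auto
          have g2st: "g2 (x(t:=k)) = st n n' t R (x(t:=k))" unfolding g2_def by (rule fold_st[OF tn azk])
          have "d (g2 (x(t:=k))) = (\<Prod>j\<in>{0..<length qs}. if x (qs ! j) then \<alpha> j k else 1)"
            unfolding d_def g2st
          proof (rule prod.cong[OF refl])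
            fix j assume j: "j \<in> {0..<length qs}"
            have "qs ! j \<in> set qs" using j by simp
            then have qj: "qs ! j \<in> c ` {1..n}" using sq by simp
            then have "qs ! j < n'" "qs ! j \<noteq> t" using cc by auto
            then have s1: "st n n' t R (x(t:=k)) (qs ! j) = x (qs ! j)" unfolding st_def by simp
            have "j < n" using j lq by simp
            then have s2: "st n n' t R (x(t:=k)) (n' + j) = k" using nR unfolding st_def by simp
            show "(if st n n' t R (x(t:=k)) (qs ! j) then \<alpha> j (st n n' t R (x(t:=k)) (n' + j)) else 1)
                = (if x (qs ! j) then \<alpha> j k else 1)" unfolding s1 s2 ..
          qed
          also have "\<dots> = \<Phi> (bt k)" unfolding \<alpha>_def \<Phi>_def by (rule regroup[OF _ qs_def]) simp
          finally show ?thesis .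
        qed
        have lhs: "apply_op (n'+n) (circuit_op (n'+n) Ls) v0 x
           = (\<Sum>k\<in>UNIV. V (bt (x t)) (bt k) * (\<Phi> (bt k) * (\<Sum>l\<in>UNIV. Vd (bt k) (bt l) * psi (x(t:=l)))))"
          using e0 e1 eW4' dg v0l by simp
        have ci: "\<forall>i\<in>set (rev [1..<n+1]). c i \<noteq> t" using cc by auto
        have rhs: "with_ancillae n' n (apply_op n' (op_prod n' (map (\<lambda>i. cgate_op (c i) t (U i)) (rev [1..<n+1]))) psi) x
           = (\<Sum>l\<in>UNIV. Pm c U x (rev [1..<n+1]) (bt (x t)) (bt l) * psi (x(t:=l)))"
          using True F_apply[OF tn xb' ci] unfolding with_ancillae_def by simp
        have dec': "\<forall>i\<in>set (rev [1..<n+1]). \<forall>a<2. \<forall>b<2. U i a b = (\<Sum>k<2. V a k * L i k * cnj (V b k))"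
          using dec by auto
        have pm: "Pm c U x (rev [1..<n+1]) a b = (\<Sum>k<2. V a k * \<Phi> k * cnj (V b k))" if "a < 2" "b < 2" for a b
          using Pm_diag[OF uV dec' that] unfolding \<Phi>_def prod_list_rev_upt .
        have bt2: "bt b < 2" for b unfolding bt_def by simp
        show ?thesis unfolding v0_def[symmetric] lhs rhs pm[OF bt2 bt2]
          by (simp add: sum_bool sum2 Vd_def bt_def algebra_simps)
      qed
    qed
    show ?thesis using A1 A2 A3 A4 by blast
  qed

theorem proposition4:
  "\<exists>C::real. C > 0 \<and>
    (\<forall>n::nat. \<forall>n'::nat. \<forall>t::nat. \<forall>c::nat \<Rightarrow> nat. \<forall>U::nat \<Rightarrow> smat.
      n \<ge> 2 \<longrightarrow> t < n' \<longrightarrow>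
      (\<forall>i\<in>{1..n}. c i < n' \<and> c i \<noteq> t) \<longrightarrow>
      (\<forall>i\<in>{1..n}. unitary_smat 2 (U i)) \<longrightarrow>
      (\<forall>i\<in>{1..n}. \<forall>j\<in>{1..n}. \<forall>a<2. \<forall>b<2.
          smat_mult 2 (U i) (U j) a b = smat_mult 2 (U j) (U i) a b) \<longrightarrow>
      (\<exists>m::nat. \<exists>Ls::gate list list.
          real m \<le> C * real n \<and>
          valid_circuit (n' + m) Ls \<and>
          real (length Ls) \<le> C * log 2 (real n) \<and>
          embeds n' (op_prod n' (map (\<lambda>i. cgate_op (c i) t (U i)) (rev [1..<n+1])))
                 m (circuit_op (n' + m) Ls)))"
  apply (rule exI[of _ 7])
  apply (intro conjI allI impI)
   apply simp
  apply (rule main_constr)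
      apply assumption+
  done

end
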